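(* Fix $n\in\mathbb Z_{\ge2}$ and $k\in\mathbb Z_{\ge1}$. Let $\sigma\in\mathrm{Av}(\searrow_n)$ with $|\sigma|\ge k$ be such that $\mathbb C(\sigma)$ is a rainbow $(n-1)$-colouring, i.e. its image is exactly $[n-1]$, and let $(\pi,\mathfrak c)=\mathrm{en}_k(\mathbb S(\sigma))$, an edge of $\mathcal{O}v_c(k,\searrow_n)$. Let $(\pi',\mathfrak c')$ be an edge of $\mathcal{O}v_c(k,\searrow_n)$ whose start vertex equals the arrival vertex of $(\pi,\mathfrak c)$, i.e. $\mathrm{be}_{k-1}(\pi',\mathfrak c')=\mathrm{en}_{k-1}(\pi,\mathfrak c)$. Then there exists $\iota\in[|\sigma|+1]$ such that $\mathrm{en}_k(\mathbb S(\sigma^{*\iota}))=(\pi',\mathfrak c')$.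
   Context: $\searrow_n=n(n-1)\cdots1$. For $I=\{i_1<\dots<i_j\}$, $\mathrm{pat}_I(\sigma)$ is the unique permutation with entries in the same relative order as $\sigma(i_1),\dots,\sigma(i_j)$; $\mathrm{Av}_m(\searrow_n)$ is the set of size-$m$ permutations with no $I$ such that $\mathrm{pat}_I(\sigma)=\searrow_n$, $\mathrm{Av}(\searrow_n)$ their union over $m\ge1$. For $\sigma\in\mathcal S_m$ and $\iota\in[m+1]$, $\sigma^{*\iota}$ is the permutation of $[m+1]$ with entries in the same relative order as $\sigma(1),\dots,\sigma(m),\iota-1/2$. A colouring of $\sigma\in\mathcal S_m$ is a map $\mathfrak c:[m]\to\mathbb Z_{\ge1}$; restriction $\mathrm{pat}_I(\sigma,\mathfrak c)=(\mathrm{pat}_I(\sigma),\mathfrak c')$ with $\mathfrak c'(\ell)=\mathfrak c(i_\ell)$; $\mathrm{be}_j=\mathrm{pat}_{\{1,\dots,j\}}$, $\mathrm{en}_j=\mathrm{pat}_{\{m-j+1,\dots,m\}}$. The RITMO colouring $\mathbb C(\sigma)$ processes indices in decreasing order of value, giving index $i$ the smallest positive integer $c$ such that no already coloured index $j<i$ has colour $c$ (equivalently: colour 1 on left-to-right maxima, colour 2 on left-to-right maxima of the remaining entries, etc.); $\mathbb S(\sigma)=(\sigma,\mathbb C(\sigma))$. A coloured permutation $(\pi,\mathfrak c)$ with $\pi\in\mathrm{Av}_k(\searrow_n)$ is inherited if there is $\sigma\in\mathrm{Av}(\searrow_n)$ with $|\sigma|\ge k$ and $\mathrm{en}_k(\mathbb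 S(\sigma))=(\pi,\mathfrak c)$; $\mathcal C_{n-1}(k)$ is the set of these. The coloured overlap graph $\mathcal{O}v_c(k,\searrow_n)$ has vertex set $\mathcal C_{n-1}(k-1)$, edge set $\mathcal C_{n-1}(k)$, the edge $(\pi,\mathfrak c)$ going from $\mathrm{be}_{k-1}(\pi,\mathfrak c)$ to $\mathrm{en}_{k-1}(\pi,\mathfrak c)$. *)

theory Defs
  imports Main "HOL.Real"
begin

text \<open>Permutations of [m] are lists of length m containing each of 1..m once.
  Positions are 0-based in lists; values are 1-based as in the paper.\<close>

definition is_perm :: "nat list \<Rightarrow> bool" where
  "is_perm \<sigma> \<longleftrightarrow> distinct \<sigma> \<and> set \<sigma> = {1..length \<sigma>}"

definition std :: "'a::linorder list \<Rightarrow> nat list" where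
  "std xs = map (\<lambda>x. card {y \<in> set xs. y \<le> x}) xs"

text \<open>pat_I(sigma), with I a set of 0-based positions.\<close>
definition pat :: "nat set \<Rightarrow> nat list \<Rightarrow> nat list" where
  "pat I \<sigma> = std (nths \<sigma> I)"

definition decr :: "nat \<Rightarrow> nat list" where
  "decr n = rev [1..<n+1]"

definition contains_decr :: "nat \<Rightarrow> nat list \<Rightarrow> bool" where
  "contains_decr n \<sigma> \<longleftrightarrow> (\<exists>I. I \<subseteq> {0..<length \<sigma>} \<and> pat I \<sigma> = decr n)"

definition Av_m :: "nat \<Rightarrow> nat \<Rightarrow> nat list set" where
  "Av_m m n = {\<sigma>. is_perm \<sigma> \<and> length \<sigma> = m \<and> \<not> contains_decr n \<sigma>}"

definition Av :: "nat \<Rightarrow> nat list set" where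
  "Av n = (\<Union>m\<in>{1..}. Av_m m n)"

definition star :: "nat list \<Rightarrow> nat \<Rightarrow> nat list" where
  "star \<sigma> \<iota> = std (map real \<sigma> @ [real \<iota> - 1/2])"

text \<open>Coloured permutations: a permutation with a colour list of the same length.\<close>
type_synonym cperm = "nat list \<times> nat list"

definition pat_c :: "nat set \<Rightarrow> cperm \<Rightarrow> cperm" where
  "pat_c I sc = (std (nths (fst sc) I), nths (snd sc) I)"

definition be :: "nat \<Rightarrow> cperm \<Rightarrow> cperm" where
  "be j sc = pat_c {0..<j} sc"

definition en :: "nat \<Rightarrow> cperm \<Rightarrow> cperm" where
  "en j sc = pat_c {length (fst sc) - j..<length (fst sc)} sc"

text \<open>RITMO colouring: indices processed in decreasing order of value; index i gets the
  least colour c \<ge> 1 not used by an already coloured index j < i (0 = not yet coloured).\<close>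
definition ritmo_step :: "nat list \<Rightarrow> nat \<Rightarrow> nat list \<Rightarrow> nat list" where
  "ritmo_step \<sigma> v cs = (let i = (LEAST i. i < length \<sigma> \<and> \<sigma> ! i = v) in
      cs[i := (LEAST c. c \<ge> 1 \<and> (\<forall>j<i. cs ! j \<noteq> c))])"

definition ritmo :: "nat list \<Rightarrow> nat list" where
  "ritmo \<sigma> = fold (ritmo_step \<sigma>) (rev [1..<length \<sigma> + 1]) (replicate (length \<sigma>) 0)"

definition S :: "nat list \<Rightarrow> cperm" where
  "S \<sigma> = (\<sigma>, ritmo \<sigma>)"

definition inherited :: "nat \<Rightarrow> nat \<Rightarrow> cperm set" where
  "inherited n k = {(\<pi>, c). \<pi> \<in> Av_m k n \<and>
      (\<exists>\<sigma>\<in>Av n. length \<sigma> \<ge> k \<and> en k (S \<sigma>) = (\<pi>, c))}"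

definition ovc_vertices :: "nat \<Rightarrow> nat \<Rightarrow> cperm set" where
  "ovc_vertices k n = inherited n (k - 1)"

definition ovc_edges :: "nat \<Rightarrow> nat \<Rightarrow> cperm set" where
  "ovc_edges k n = inherited n k"

definition ovc_start :: "nat \<Rightarrow> cperm \<Rightarrow> cperm" where
  "ovc_start k e = be (k - 1) e"

definition ovc_arrival :: "nat \<Rightarrow> cperm \<Rightarrow> cperm" where
  "ovc_arrival k e = en (k - 1) e"

end

theory Submission
  imports Defs
begin


lemma least_avoid:
  fixes f :: "nat \<Rightarrow> nat" and Q :: "nat \<Rightarrow> bool" and p :: nat
  defines "L \<equiv> (LEAST c. 1 \<le> c \<and> (\<forall>j<p. Q j \<longrightarrow> f j \<noteq> c))"
  shows "1 \<le> L" "\<And>j. j < p \<Longrightarrow> Q j \<Longrightarrow> f j \<noteq> L"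
    "\<And>c. 1 \<le> c \<Longrightarrow> c < L \<Longrightarrow> \<exists>j<p. Q j \<and> f j = c"
    "\<And>c. 1 \<le> c \<Longrightarrow> (\<forall>j<p. Q j \<longrightarrow> f j \<noteq> c) \<Longrightarrow> L \<le> c"
proof -
  define c0 where "c0 = Suc (Max (insert 0 (f ` {..<p})))"
  have "\<forall>j<p. f j \<le> Max (insert 0 (f ` {..<p}))" by (intro allI impI Max_ge) auto
  hence ex: "1 \<le> c0 \<and> (\<forall>j<p. Q j \<longrightarrow> f j \<noteq> c0)" unfolding c0_def by fastforce
  have LI: "1 \<le> L \<and> (\<forall>j<p. Q j \<longrightarrow> f j \<noteq> L)" unfolding L_def by (rule LeastI[of _ c0]) (rule ex)
  show "1 \<le> L" using LI by simp
  show "\<And>j. j < p \<Longrightarrow> Q j \<Longrightarrow> f j \<noteq> L" using LI by simp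
  show "\<And>c. 1 \<le> c \<Longrightarrow> c < L \<Longrightarrow> \<exists>j<p. Q j \<and> f j = c"
  proof -
    fix c assume "1 \<le> c" "c < L"
    have "\<not> (1 \<le> c \<and> (\<forall>j<p. Q j \<longrightarrow> f j \<noteq> c))" using \<open>c < L\<close> unfolding L_def by (rule not_less_Least)
    thus "\<exists>j<p. Q j \<and> f j = c" using \<open>1 \<le> c\<close> by blast
  qed
  show "\<And>c. 1 \<le> c \<Longrightarrow> (\<forall>j<p. Q j \<longrightarrow> f j \<noteq> c) \<Longrightarrow> L \<le> c"
    unfolding L_def by (rule Least_le) simp
qed

definition newc :: "'a::linorder list \<Rightarrow> nat list \<Rightarrow> 'a \<Rightarrow> nat" where
  "newc xs cs x = (LEAST c. 1 \<le> c \<and> (\<forall>j<length xs. x < xs!j \<longrightarrow> cs!j \<noteq> c))"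

definition colstep :: "('a::linorder list \<times> nat list) \<Rightarrow> 'a \<Rightarrow> ('a list \<times> nat list)" where
  "colstep st x = (fst st @ [x], snd st @ [newc (fst st) (snd st) x])"

definition cols :: "'a::linorder list \<Rightarrow> nat list" where
  "cols xs = snd (foldl colstep ([],[]) xs)"

lemma fst_foldl_colstep: "fst (foldl colstep ([],[]) xs) = xs"
  by (induction xs rule: rev_induct) (auto simp: colstep_def)

lemma cols_snoc: "cols (xs@[x]) = cols xs @ [newc xs (cols xs) x]"
proof -
  have "foldl colstep ([],[]) xs = (xs, cols xs)"
    using fst_foldl_colstep[of xs] unfolding cols_def by (metis prod.collapse)
  thus ?thesis unfolding cols_def by (simp add: colstep_def fst_foldl_colstep)
qed

lemma cols_Nil[simp]: "cols [] = []" by (simp add: cols_def)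

lemma length_cols[simp]: "length (cols xs) = length xs"
  by (induction xs rule: rev_induct) (auto simp: cols_snoc)

lemma cols_nth:
  "p < length xs \<Longrightarrow> cols xs ! p = (LEAST c. 1 \<le> c \<and> (\<forall>j<p. xs!p < xs!j \<longrightarrow> cols xs!j \<noteq> c))"
proof (induction xs arbitrary: p rule: rev_induct)
  case Nil thus ?case by simp
next
  case (snoc x xs)
  show ?case
  proof (cases "p < length xs")
    case True
    have e: "\<And>j. j < p \<Longrightarrow> (xs@[x])!j = xs!j \<and> cols (xs@[x])!j = cols xs ! j"
      using True by (simp add: nth_append cols_snoc)
    have "(\<lambda>c. 1 \<le> c \<and> (\<forall>j<p. (xs@[x])!p < (xs@[x])!j \<longrightarrow> cols (xs@[x])!j \<noteq> c)) =
          (\<lambda>c. 1 \<le> c \<and> (\<forall>j<p. xs!p < xs!j \<longrightarrow> cols xs!j \<noteq> c))"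
      using e True by (auto simp: nth_append)
    thus ?thesis using snoc.IH[OF True] True by (simp add: nth_append cols_snoc)
  next
    case False
    hence p: "p = length xs" using snoc.prems by simp
    have "(\<lambda>c. 1 \<le> c \<and> (\<forall>j<p. (xs@[x])!p < (xs@[x])!j \<longrightarrow> cols (xs@[x])!j \<noteq> c)) =
          (\<lambda>c. 1 \<le> c \<and> (\<forall>j<length xs. x < xs!j \<longrightarrow> cols xs!j \<noteq> c))"
      using p by (auto simp: nth_append cols_snoc)
    thus ?thesis using p by (simp add: cols_snoc newc_def nth_append)
  qed
qed

lemma col_props:
  assumes "p < length xs"
  shows "1 \<le> cols xs ! p"
    "\<And>j. j < p \<Longrightarrow> xs!p < xs!j \<Longrightarrow> cols xs!j \<noteq> cols xs!p"
    "\<And>c. 1 \<le> c \<Longrightarrow> c < cols xs!p \<Longrightarrow> \<exists>j<p. xs!p < xs!j \<and> cols xs!j = c"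
    "\<And>c. 1 \<le> c \<Longrightarrow> (\<forall>j<p. xs!p < xs!j \<longrightarrow> cols xs!j \<noteq> c) \<Longrightarrow> cols xs!p \<le> c"
  using least_avoid[where p=p and Q="\<lambda>j. xs!p < xs!j" and f="\<lambda>j. cols xs!j"] cols_nth[OF assms] by auto

lemma col_less:
  assumes "j < p" "p < length xs" "xs!p < xs!j"
  shows "cols xs!j < cols xs!p"
proof (rule ccontr)
  assume "\<not> ?thesis"
  moreover have "cols xs!j \<noteq> cols xs!p" using col_props(2)[OF assms(2) assms(1,3)] .
  ultimately have lt: "cols xs!p < cols xs!j" by simp
  have "1 \<le> cols xs!p" using col_props(1)[OF assms(2)] .
  then obtain j' where "j' < j" "xs!j < xs!j'" "cols xs!j' = cols xs!p"
    using col_props(3)[of j xs "cols xs!p"] assms lt by auto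
  moreover have "xs!p < xs!j'" using assms(3) \<open>xs!j < xs!j'\<close> by simp
  ultimately show False using col_props(2)[OF assms(2), of j'] assms(1) by simp
qed

lemma newc_props:
  fixes xs :: "'a::linorder list" and x :: 'a
  defines "F \<equiv> newc xs (cols xs) x"
  shows "1 \<le> F"
    "\<And>j. j < length xs \<Longrightarrow> x < xs!j \<Longrightarrow> cols xs!j \<noteq> F"
    "\<And>c. 1 \<le> c \<Longrightarrow> c < F \<Longrightarrow> \<exists>j<length xs. x < xs!j \<and> cols xs!j = c"
    "\<And>c. 1 \<le> c \<Longrightarrow> (\<forall>j<length xs. x < xs!j \<longrightarrow> cols xs!j \<noteq> c) \<Longrightarrow> F \<le> c"
  using least_avoid[where p="length xs" and Q="\<lambda>j. x < xs!j" and f="\<lambda>j. cols xs!j"] unfolding F_def newc_def by auto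

lemma newc_gt:
  assumes "j < length xs" "x < xs!j"
  shows "cols xs!j < newc xs (cols xs) x"
proof (rule ccontr)
  let ?F = "newc xs (cols xs) x"
  assume "\<not> ?thesis"
  moreover have "cols xs!j \<noteq> ?F" using newc_props(2)[OF assms] .
  ultimately have lt: "?F < cols xs!j" by simp
  have "1 \<le> ?F" by (rule newc_props(1))
  then obtain j' where "j' < j" "xs!j < xs!j'" "cols xs!j' = ?F"
    using col_props(3)[of j xs ?F] assms lt by auto
  moreover have "x < xs!j'" using assms(2) \<open>xs!j < xs!j'\<close> by simp
  ultimately show False using newc_props(2)[of j' xs x] assms(1) by simp
qed



lemma perm_facts:
  assumes "is_perm \<sigma>"
  shows "distinct \<sigma>" "\<And>i. i < length \<sigma> \<Longrightarrow> 1 \<le> \<sigma>!i \<and> \<sigma>!i \<le> length \<sigma>"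
    "\<And>v. 1 \<le> v \<Longrightarrow> v \<le> length \<sigma> \<Longrightarrow> \<exists>i<length \<sigma>. \<sigma>!i = v"
proof -
  show "distinct \<sigma>" using assms by (simp add: is_perm_def)
  show "\<And>i. i < length \<sigma> \<Longrightarrow> 1 \<le> \<sigma>!i \<and> \<sigma>!i \<le> length \<sigma>"
  proof -
    fix i assume "i < length \<sigma>"
    hence "\<sigma>!i \<in> set \<sigma>" by simp
    thus "1 \<le> \<sigma>!i \<and> \<sigma>!i \<le> length \<sigma>" using assms by (simp add: is_perm_def)
  qed
  show "\<And>v. 1 \<le> v \<Longrightarrow> v \<le> length \<sigma> \<Longrightarrow> \<exists>i<length \<sigma>. \<sigma>!i = v"
  proof -
    fix v assume "1 \<le> v" "v \<le> length \<sigma>"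
    hence "v \<in> set \<sigma>" using assms by (simp add: is_perm_def)
    thus "\<exists>i<length \<sigma>. \<sigma>!i = v" by (simp add: in_set_conv_nth)
  qed
qed

lemma ritmo_cols:
  assumes P: "is_perm \<sigma>"
  shows "ritmo \<sigma> = cols \<sigma>"
proof -
  let ?m = "length \<sigma>"
  have dist: "distinct \<sigma>" using perm_facts(1)[OF P] .
  have bnd: "\<And>i. i < ?m \<Longrightarrow> 1 \<le> \<sigma>!i \<and> \<sigma>!i \<le> ?m" using perm_facts(2)[OF P] .
  let ?st = "\<lambda>v. map (\<lambda>i. if v \<le> \<sigma>!i then cols \<sigma>!i else 0) [0..<?m]"
  have inv: "fold (ritmo_step \<sigma>) (rev [v..<?m+1]) (replicate ?m 0) = ?st v" if "1 \<le> v" "v \<le> ?m+1" for v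
    using that(2,1)
  proof (induction v rule: inc_induct)
    case base
    have "\<And>i. i<?m \<Longrightarrow> \<not> Suc ?m \<le> \<sigma>!i" using bnd by (meson not_less_eq_eq)
    thus ?case by (intro nth_equalityI) auto
  next
    case (step v)
    have "[v..<?m+1] = v # [Suc v..<?m+1]" using step.hyps by (simp add: upt_rec)
    hence e: "fold (ritmo_step \<sigma>) (rev [v..<?m+1]) (replicate ?m 0) = ritmo_step \<sigma> v (?st (Suc v))"
      using step.IH step.prems by simp
    obtain p where p: "p < ?m" "\<sigma>!p = v" using perm_facts(3)[OF P, of v] step.hyps step.prems by auto
    have uniq: "\<And>i. i < ?m \<Longrightarrow> \<sigma>!i = v \<Longrightarrow> i = p" using dist p by (metis nth_eq_iff_index_eq)
    have idx: "(LEAST i. i < ?m \<and> \<sigma>!i = v) = p"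
    proof (rule Least_equality)
      show "p < ?m \<and> \<sigma>!p = v" using p by simp
      fix y assume "y < ?m \<and> \<sigma>!y = v"
      hence "y = p" using uniq by blast
      thus "p \<le> y" by simp
    qed
    have "(\<lambda>c. 1 \<le> c \<and> (\<forall>j<p. ?st (Suc v) ! j \<noteq> c)) =
          (\<lambda>c. 1 \<le> c \<and> (\<forall>j<p. \<sigma>!p < \<sigma>!j \<longrightarrow> cols \<sigma>!j \<noteq> c))"
      using p by (auto simp: fun_eq_iff)
    hence L: "(LEAST c. 1 \<le> c \<and> (\<forall>j<p. ?st (Suc v) ! j \<noteq> c)) = cols \<sigma> ! p"
      using cols_nth[OF p(1)] by simp
    have "ritmo_step \<sigma> v (?st (Suc v)) = (?st (Suc v))[p := cols \<sigma> ! p]"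
      unfolding ritmo_step_def Let_def idx L ..
    also have "\<dots> = ?st v"
    proof (rule nth_equalityI)
      fix i assume "i < length ((?st (Suc v))[p := cols \<sigma> ! p])"
      hence i: "i < ?m" by simp
      show "(?st (Suc v))[p := cols \<sigma> ! p] ! i = ?st v ! i"
      proof (cases "i = p")
        case True thus ?thesis using p by simp
      next
        case False
        hence "\<sigma>!i \<noteq> v" using uniq i by blast
        thus ?thesis using False i by auto
      qed
    qed simp
    finally show ?case using e by simp
  qed
  have "ritmo \<sigma> = ?st 1" unfolding ritmo_def using inv[of 1] by simp
  also have "\<dots> = cols \<sigma>" using bnd by (intro nth_equalityI) auto
  finally show ?thesis .
qed



definition oiso :: "'a::linorder list \<Rightarrow> 'b::linorder list \<Rightarrow> bool" where
  "oiso xs ys \<longleftrightarrow> length xs = length ys \<and>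
     (\<forall>i<length xs. \<forall>j<length xs. xs!i \<le> xs!j \<longleftrightarrow> ys!i \<le> ys!j)"

lemma oiso_sym: "oiso xs ys \<Longrightarrow> oiso ys xs" unfolding oiso_def by (metis (full_types))
lemma oiso_trans: "oiso xs ys \<Longrightarrow> oiso ys zs \<Longrightarrow> oiso xs zs" unfolding oiso_def by (metis (full_types))
lemma oiso_drop: "oiso xs ys \<Longrightarrow> oiso (drop l xs) (drop l ys)" unfolding oiso_def by auto
lemma oiso_take: "oiso xs ys \<Longrightarrow> oiso (take l xs) (take l ys)" unfolding oiso_def by auto
lemma oiso_real: "oiso xs (map real xs)" unfolding oiso_def by auto
lemma oiso_less: "oiso xs ys \<Longrightarrow> i < length xs \<Longrightarrow> j < length xs \<Longrightarrow> xs!i < xs!j \<longleftrightarrow> ys!i < ys!j"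
  unfolding oiso_def by (meson not_le)
lemma oiso_distinct:
  assumes "oiso xs ys" "distinct xs" shows "distinct ys"
  unfolding distinct_conv_nth
proof (intro allI impI)
  fix i j assume ij: "i < length ys" "j < length ys" "i \<noteq> j"
  have l: "length xs = length ys" using assms(1) by (simp add: oiso_def)
  show "ys!i \<noteq> ys!j"
  proof
    assume e: "ys!i = ys!j"
    have "xs!i \<le> xs!j" "xs!j \<le> xs!i" using assms(1) ij l e unfolding oiso_def by auto
    hence "xs!i = xs!j" by simp
    thus False using assms(2) ij l by (simp add: nth_eq_iff_index_eq)
  qed
qed

lemma oiso_snoc:
  assumes "oiso xs ys" "\<forall>i<length xs. (xs!i \<le> x \<longleftrightarrow> ys!i \<le> y) \<and> (x \<le> xs!i \<longleftrightarrow> y \<le> ys!i)"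
  shows "oiso (xs@[x]) (ys@[y])"
  unfolding oiso_def
proof (intro conjI allI impI)
  have l: "length xs = length ys" using assms(1) by (simp add: oiso_def)
  thus "length (xs@[x]) = length (ys@[y])" by simp
  fix i j assume i: "i < length (xs@[x])" and j: "j < length (xs@[x])"
  have o: "\<And>i j. i < length xs \<Longrightarrow> j < length xs \<Longrightarrow> xs!i \<le> xs!j \<longleftrightarrow> ys!i \<le> ys!j"
    using assms(1) by (simp add: oiso_def)
  consider "i < length xs" "j < length xs" | "i < length xs" "j = length xs" | "i = length xs" "j < length xs"
    | "i = length xs" "j = length xs" using i j by fastforce
  thus "(xs@[x])!i \<le> (xs@[x])!j \<longleftrightarrow> (ys@[y])!i \<le> (ys@[y])!j"
    by cases (use o assms(2) l in \<open>simp_all add: nth_append\<close>)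
qed

lemma length_std[simp]: "length (std xs) = length xs" by (simp add: std_def)

lemma std_nth: "i < length xs \<Longrightarrow> std xs ! i = card {y \<in> set xs. y \<le> xs!i}"
  by (simp add: std_def)

lemma oiso_std: "oiso xs (std xs)"
proof -
  have A: "std xs ! i \<le> std xs ! j" if "i < length xs" "j < length xs" "xs!i \<le> xs!j" for i j
  proof -
    have "{y\<in>set xs. y \<le> xs!i} \<subseteq> {y\<in>set xs. y \<le> xs!j}" using that(3) order_trans by blast
    hence "card {y\<in>set xs. y \<le> xs!i} \<le> card {y\<in>set xs. y \<le> xs!j}" by (rule card_mono[rotated]) simp
    thus ?thesis using that(1,2) by (simp add: std_nth)
  qed
  have B: "std xs ! j < std xs ! i" if "i < length xs" "j < length xs" "xs!j < xs!i" for i j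
  proof -
    have "xs!i \<in> {y\<in>set xs. y \<le> xs!i}" using that(1) by simp
    have "xs!i \<notin> {y\<in>set xs. y \<le> xs!j}" using that(3) by (simp add: not_le)
    have "{y\<in>set xs. y \<le> xs!j} \<subseteq> {y\<in>set xs. y \<le> xs!i}" using that(3) less_imp_le order_trans by blast
    hence "{y\<in>set xs. y \<le> xs!j} \<subset> {y\<in>set xs. y \<le> xs!i}"
      using \<open>xs!i \<in> {y\<in>set xs. y \<le> xs!i}\<close> \<open>xs!i \<notin> {y\<in>set xs. y \<le> xs!j}\<close> by blast
    thus ?thesis using that by (simp add: std_nth psubset_card_mono)
  qed
  show ?thesis unfolding oiso_def length_std
  proof (intro conjI allI impI refl iffI)
    fix i j assume "i < length xs" "j < length xs"
    thus "xs!i \<le> xs!j \<Longrightarrow> std xs ! i \<le> std xs ! j" using A by blast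
    show "std xs ! i \<le> std xs ! j \<Longrightarrow> xs!i \<le> xs!j"
      using B[of i j] \<open>i < length xs\<close> \<open>j < length xs\<close> by (meson not_le)
  qed
qed

lemma std_card_idx:
  assumes "distinct xs" "i < length xs"
  shows "std xs ! i = card {j. j < length xs \<and> xs!j \<le> xs!i}"
proof -
  have "{y \<in> set xs. y \<le> xs!i} = (nth xs) ` {j. j < length xs \<and> xs!j \<le> xs!i}"
    by (auto simp: in_set_conv_nth)
  moreover have "inj_on (nth xs) {j. j < length xs \<and> xs!j \<le> xs!i}"
    using assms(1) by (auto simp: inj_on_def nth_eq_iff_index_eq)
  ultimately show ?thesis using assms(2) by (simp add: std_nth card_image)
qed

lemma std_oiso_eq:
  assumes "oiso xs ys" "distinct xs"
  shows "std xs = std ys"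
proof -
  have d: "distinct ys" using oiso_distinct assms .
  have l: "length xs = length ys" using assms(1) by (simp add: oiso_def)
  show ?thesis
  proof (rule nth_equalityI)
    show "length (std xs) = length (std ys)" using l by (simp add: std_def)
    fix i assume "i < length (std xs)"
    hence i: "i < length xs" by (simp add: std_def)
    have "{j. j < length xs \<and> xs!j \<le> xs!i} = {j. j < length ys \<and> ys!j \<le> ys!i}"
      using assms(1) i l unfolding oiso_def by auto
    thus "std xs ! i = std ys ! i" using std_card_idx[OF assms(2) i] std_card_idx[OF d] i l by simp
  qed
qed

lemma std_eq_oiso: assumes "std xs = std ys" shows "oiso xs ys"
proof -
  have "oiso xs (std ys)" using oiso_std[of xs] assms by simp
  thus ?thesis using oiso_trans oiso_sym[OF oiso_std[of ys]] by blast
qed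

lemma distinct_std: "distinct xs \<Longrightarrow> distinct (std xs)"
  using oiso_distinct oiso_std by blast


lemma std_std_drop: "distinct xs \<Longrightarrow> std (drop l (std xs)) = std (drop l xs)"
  using std_oiso_eq[OF oiso_drop[OF oiso_sym[OF oiso_std[of xs]]]] distinct_drop distinct_std by blast
lemma std_std_take: "distinct xs \<Longrightarrow> std (take l (std xs)) = std (take l xs)"
  using std_oiso_eq[OF oiso_take[OF oiso_sym[OF oiso_std[of xs]]]] distinct_take distinct_std by blast

lemma is_perm_std:
  assumes "distinct xs"
  shows "is_perm (std xs)"
proof -
  have d: "distinct (std xs)" using distinct_std[OF assms] .
  have sub: "set (std xs) \<subseteq> {1..length xs}"
  proof
    fix y assume "y \<in> set (std xs)"
    then obtain i where i: "i < length xs" "y = std xs ! i" by (auto simp: in_set_conv_nth)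
    have "xs!i \<in> {z \<in> set xs. z \<le> xs!i}" using i by simp
    hence "1 \<le> card {z \<in> set xs. z \<le> xs!i}"
    proof -
      have "0 < card {z \<in> set xs. z \<le> xs!i}" using \<open>xs!i \<in> {z \<in> set xs. z \<le> xs!i}\<close> by (subst card_gt_0_iff) auto
      thus ?thesis by simp
    qed
    moreover have "card {z \<in> set xs. z \<le> xs!i} \<le> card (set xs)" by (rule card_mono) auto
    ultimately show "y \<in> {1..length xs}" using i assms by (simp add: std_nth distinct_card)
  qed
  have "card (set (std xs)) = card {1..length xs}" using d by (simp add: distinct_card)
  hence "set (std xs) = {1..length xs}" using sub by (simp add: card_subset_eq)
  thus ?thesis using d by (simp add: is_perm_def)
qed




lemma cols_oiso:
  assumes "oiso xs ys"
  shows "cols xs = cols ys"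
proof -
  have l: "length xs = length ys" using assms by (simp add: oiso_def)
  have "\<forall>i. i < p \<longrightarrow> i < length xs \<longrightarrow> cols xs ! i = cols ys ! i" for p
  proof (induction p)
    case 0 thus ?case by simp
  next
    case (Suc p)
    have "cols xs ! p = cols ys ! p" if "p < length xs"
    proof -
      have "(\<lambda>c. 1 \<le> c \<and> (\<forall>j<p. xs!p < xs!j \<longrightarrow> cols xs!j \<noteq> c)) =
            (\<lambda>c. 1 \<le> c \<and> (\<forall>j<p. ys!p < ys!j \<longrightarrow> cols ys!j \<noteq> c))"
      proof -
        have "\<forall>j<p. (xs!p < xs!j) = (ys!p < ys!j)" using oiso_less[OF assms that] that by auto
        thus ?thesis using Suc.IH that by (auto simp: fun_eq_iff)
      qed
      thus ?thesis using cols_nth[OF that] cols_nth[of p ys] that l by simp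
    qed
    thus ?case using Suc.IH less_Suc_eq by auto
  qed
  thus ?thesis using l by (intro nth_equalityI) auto
qed



lemma nths_cong_len: "(\<And>i. i < length xs \<Longrightarrow> i \<in> A \<longleftrightarrow> i \<in> B) \<Longrightarrow> nths xs A = nths xs B"
  unfolding nths_def
  by (rule arg_cong[where f="map fst"], rule filter_cong) (auto dest: set_zip_rightD)

lemma nths_interval: "length xs = L \<Longrightarrow> nths xs {l..<L} = drop l xs"
  by (subst drop_eq_nths, rule nths_cong_len) auto

lemma nths_prefix: "nths xs {0..<j} = take j xs"
  by (simp add: atLeast0LessThan)

lemma nths_insert_last:
  assumes "\<forall>i\<in>I. i < q" "q < length xs"
  shows "nths xs (insert q I) = nths xs I @ [xs!q]"
proof -
  have xs: "xs = take q xs @ [xs!q] @ drop (Suc q) xs"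
    using assms(2) by (metis append_Cons append_Nil id_take_nth_drop)
  have l: "length (take q xs) = q" using assms(2) by simp
  have "nths xs (insert q I) = nths (take q xs) (insert q I) @ nths ([xs!q] @ drop (Suc q) xs) {j. j + q \<in> insert q I}"
    by (subst xs, subst nths_append) (use assms(2) in \<open>simp add: min_absorb2\<close>)
  also have "nths (take q xs) (insert q I) = nths (take q xs) I"
    by (rule nths_cong_len) (simp add: l)
  also have "nths ([xs!q] @ drop (Suc q) xs) {j. j + q \<in> insert q I} = [xs!q]"
  proof -
    have "nths ([xs!q] @ drop (Suc q) xs) {j. j + q \<in> insert q I} =
          nths [xs!q] {j. j + q \<in> insert q I} @ nths (drop (Suc q) xs) {j. j + length [xs!q] \<in> {j. j + q \<in> insert q I}}"
      by (rule nths_append)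
    moreover have "{j. j + length [xs!q] \<in> {j. j + q \<in> insert q I}} = {}" using assms(1) by auto
    ultimately show ?thesis by simp
  qed
  also have "nths xs I = nths (take q xs) I @ nths ([xs!q] @ drop (Suc q) xs) {j. j + q \<in> I}"
    by (subst xs, subst nths_append) (use assms(2) in \<open>simp add: min_absorb2\<close>)
  moreover have "nths ([xs!q] @ drop (Suc q) xs) {j. j + q \<in> I} = []"
  proof -
    have "{j. j + q \<in> I} = {}" using assms(1) by auto
    thus ?thesis by simp
  qed
  ultimately show ?thesis by simp
qed

lemma std_decr:
  assumes "sorted_wrt (>) L" "length L = c"
  shows "std L = decr c"
proof (rule nth_equalityI)
  show "length (std L) = length (decr c)" using assms by (simp add: decr_def)
  fix i assume "i < length (std L)"
  hence i: "i < c" using assms by simp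
  have d: "distinct L" using assms(1) by (metis distinct_conv_nth nat_neq_iff sorted_wrt_nth_less less_irrefl)
  have "{j. j < length L \<and> L!j \<le> L!i} = {i..<c}"
  proof -
    have "L!j \<le> L!i \<longleftrightarrow> i \<le> j" if "j < c" for j
      using sorted_wrt_nth_less[OF assms(1), of i j] sorted_wrt_nth_less[OF assms(1), of j i] i that assms(2)
      by (cases "i < j"; cases "j < i") auto
    thus ?thesis using assms(2) by auto
  qed
  hence "std L ! i = c - i" using std_card_idx[OF d] i assms(2) by simp
  moreover have "decr c ! i = c - i" using i by (simp add: decr_def rev_nth del: upt_Suc)
  ultimately show "std L ! i = decr c ! i" by simp
qed

lemma chain:
  fixes \<tau> :: "nat list"
  shows "\<And>p. p < length \<tau> \<Longrightarrow> 1 \<le> c \<Longrightarrow> c \<le> cols \<tau> ! p \<Longrightarrow>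
    \<exists>I. finite I \<and> p \<in> I \<and> (\<forall>i\<in>I. i \<le> p) \<and> sorted_wrt (>) (nths \<tau> I) \<and>
        length (nths \<tau> I) = c \<and> (\<forall>y\<in>set (nths \<tau> I). \<tau>!p \<le> y)"
proof (induction c)
  case 0 thus ?case by simp
next
  case (Suc c p)
  show ?case
  proof (cases "c = 0")
    case True
    have "nths \<tau> (insert p {}) = [\<tau>!p]" using nths_insert_last[of "{}" p \<tau>] Suc.prems by simp
    thus ?thesis using True by (intro exI[of _ "{p}"]) auto
  next
    case False
    obtain j where j: "j < p" "\<tau>!p < \<tau>!j" "cols \<tau> ! j = c"
      using col_props(3)[OF Suc.prems(1), of c] False Suc.prems by auto
    obtain I where I: "finite I" "j \<in> I" "\<forall>i\<in>I. i \<le> j" "sorted_wrt (>) (nths \<tau> I)"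
        "length (nths \<tau> I) = c" "\<forall>y\<in>set (nths \<tau> I). \<tau>!j \<le> y"
      using Suc.IH[of j] j Suc.prems False by auto
    have e: "nths \<tau> (insert p I) = nths \<tau> I @ [\<tau>!p]"
      using nths_insert_last[of I p \<tau>] I(3) j(1) Suc.prems(1) by fastforce
    show ?thesis
    proof (intro exI[of _ "insert p I"] conjI)
      show "sorted_wrt (>) (nths \<tau> (insert p I))" unfolding e using I(4,6) j(2)
        by (auto simp: sorted_wrt_append)
    qed (use I e j in auto)
  qed
qed

lemma colour_bound:
  assumes "\<not> contains_decr n \<tau>" "p < length \<tau>" "1 \<le> n"
  shows "cols \<tau> ! p < n"
proof (rule ccontr)
  assume "\<not> ?thesis"
  then obtain I where I: "p \<in> I" "\<forall>i\<in>I. i \<le> p" "sorted_wrt (>) (nths \<tau> I)" "length (nths \<tau> I) = n"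
    using chain[OF assms(2) assms(3)] by force
  have "pat I \<tau> = decr n" unfolding pat_def using std_decr I(3,4) .
  moreover have "I \<subseteq> {0..<length \<tau>}" using I(2) assms(2) by auto
  ultimately show False using assms(1) unfolding contains_decr_def by blast
qed



lemma half_lt: "(real i - 1/2 < real s) = (i \<le> s)"
proof -
  have "s < i \<Longrightarrow> real s + 1 \<le> real i" by (metis Suc_leI of_nat_Suc of_nat_le_iff add.commute)
  moreover have "i \<le> s \<Longrightarrow> real i \<le> real s" by simp
  ultimately show ?thesis by (cases "i \<le> s") (auto simp: not_le)
qed

lemma half_gt: "(real s < real i - 1/2) = (s < i)"
proof -
  have "s < i \<Longrightarrow> real s + 1 \<le> real i" by (metis Suc_leI of_nat_Suc of_nat_le_iff add.commute)
  moreover have "i \<le> s \<Longrightarrow> real i \<le> real s" by simp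
  ultimately show ?thesis by (cases "i \<le> s") (auto simp: not_le)
qed

lemma dIVT:
  fixes g :: "nat \<Rightarrow> nat"
  assumes "lo \<le> hi" "g hi \<le> d" "d \<le> g lo" "\<forall>i. lo \<le> i \<longrightarrow> i < hi \<longrightarrow> g i \<le> g (Suc i) + 1"
  shows "\<exists>i\<in>{lo..hi}. g i = d"
  using assms
proof (induction hi)
  case 0 thus ?case by auto
next
  case (Suc h)
  show ?case
  proof (cases "g (Suc h) = d")
    case True thus ?thesis using Suc.prems by auto
  next
    case False
    hence lt: "g (Suc h) < d" using Suc.prems by simp
    have "lo \<noteq> Suc h" using lt Suc.prems by auto
    hence lo: "lo \<le> h" using Suc.prems by simp
    have "g h \<le> d" using Suc.prems(4) lo lt by fastforce
    then obtain i where "i \<in> {lo..h}" "g i = d" using Suc.IH[OF lo] Suc.prems by auto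
    thus ?thesis by auto
  qed
qed

lemma core:
  fixes \<sigma> \<tau> :: "nat list" and k n :: nat
  assumes P\<sigma>: "is_perm \<sigma>" and d\<tau>: "distinct \<tau>"
    and k: "1 \<le> k" "k \<le> length \<sigma>" "k \<le> length \<tau>"
    and iso: "oiso (drop (length \<sigma> - k + 1) \<sigma>) (take (k-1) (drop (length \<tau> - k) \<tau>))"
    and colseq: "drop (length \<sigma> - k + 1) (cols \<sigma>) = take (k-1) (drop (length \<tau> - k) (cols \<tau>))"
    and dbound: "cols \<tau> ! (length \<tau> - 1) \<le> n - 1"
    and rainbow: "set (cols \<sigma>) = {1..n-1}"
  shows "\<exists>\<iota>\<in>{1..length \<sigma> + 1}.
     oiso (map real (drop (length \<sigma> - k + 1) \<sigma>) @ [real \<iota> - 1/2])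
          (take (k-1) (drop (length \<tau> - k) \<tau>) @ [\<tau> ! (length \<tau> - 1)]) \<and>
     newc (map real \<sigma>) (cols \<sigma>) (real \<iota> - 1/2) = cols \<tau> ! (length \<tau> - 1)"
proof -
  define m where "m = length \<sigma>"
  define t where "t = length \<tau>"
  define r where "r = m - k + 1"
  define q where "q = t - k"
  define v where "v = \<tau> ! (t - 1)"
  define d where "d = cols \<tau> ! (t - 1)"
  define c\<sigma> where "c\<sigma> = cols \<sigma>"
  define c\<tau> where "c\<tau> = cols \<tau>"
  define F where "F x = newc (map real \<sigma>) c\<sigma> x" for x
  define G where "G i = F (real i - 1/2)" for i :: nat
  have mo: "m = r + (k-1)" using k unfolding m_def r_def by simp
  have to: "t - 1 = q + (k-1)" "t - 1 < t" using k unfolding t_def q_def by auto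
  have d\<sigma>: "distinct \<sigma>" using perm_facts(1)[OF P\<sigma>] .
  have bnd: "\<And>i. i < m \<Longrightarrow> 1 \<le> \<sigma>!i \<and> \<sigma>!i \<le> m" using perm_facts(2)[OF P\<sigma>] unfolding m_def .
  have ex: "\<And>w. 1 \<le> w \<Longrightarrow> w \<le> m \<Longrightarrow> \<exists>i<m. \<sigma>!i = w" using perm_facts(3)[OF P\<sigma>] unfolding m_def .
  have ord: "\<And>i j. i < k-1 \<Longrightarrow> j < k-1 \<Longrightarrow> \<sigma>!(r+i) < \<sigma>!(r+j) \<longleftrightarrow> \<tau>!(q+i) < \<tau>!(q+j)"
  proof -
    fix i j assume ij: "i < k-1" "j < k-1"
    have "length (drop (length \<sigma> - k + 1) \<sigma>) = k - 1" using k by simp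
    thus "\<sigma>!(r+i) < \<sigma>!(r+j) \<longleftrightarrow> \<tau>!(q+i) < \<tau>!(q+j)"
      using oiso_less[OF iso, of i j] ij k unfolding r_def q_def m_def t_def by simp
  qed
  have colw: "\<And>i. i < k-1 \<Longrightarrow> c\<sigma>!(r+i) = c\<tau>!(q+i)"
  proof -
    fix i assume i: "i < k-1"
    have "drop (length \<sigma> - k + 1) (cols \<sigma>) ! i = take (k-1) (drop (length \<tau> - k) (cols \<tau>)) ! i"
      using colseq by simp
    thus "c\<sigma>!(r+i) = c\<tau>!(q+i)" using i k unfolding r_def q_def m_def t_def c\<sigma>_def c\<tau>_def by simp
  qed
  have neq: "\<And>i. i < k-1 \<Longrightarrow> \<tau>!(q+i) \<noteq> v"
  proof -
    fix i assume "i < k-1"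
    hence "q+i < t" "t-1 < t" "q+i \<noteq> t-1" using to by auto
    thus "\<tau>!(q+i) \<noteq> v" unfolding v_def t_def using d\<tau> by (simp add: nth_eq_iff_index_eq)
  qed
  have d1: "1 \<le> d" using col_props(1)[of "t-1" \<tau>] to unfolding d_def t_def by simp
  have \<tau>C1: "\<And>z. z < t-1 \<Longrightarrow> v < \<tau>!z \<Longrightarrow> c\<tau>!z \<noteq> d"
    using col_props(2)[of "t-1" \<tau>] to unfolding d_def t_def v_def c\<tau>_def by auto
  have \<tau>C3: "\<And>z. z < t-1 \<Longrightarrow> v < \<tau>!z \<Longrightarrow> c\<tau>!z < d"
    using col_less[of _ "t-1" \<tau>] to unfolding d_def t_def v_def c\<tau>_def by auto
  have \<tau>C2: "\<And>c. 1 \<le> c \<Longrightarrow> c < d \<Longrightarrow> \<exists>z<t-1. v < \<tau>!z \<and> c\<tau>!z = c"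
    using col_props(3)[of "t-1" \<tau>] to unfolding d_def t_def v_def c\<tau>_def by auto
  have cr: "cols (map real \<sigma>) = c\<sigma>" unfolding c\<sigma>_def by (rule cols_oiso[OF oiso_sym[OF oiso_real]])
  have F1: "\<And>x. 1 \<le> F x" "\<And>x j. j < m \<Longrightarrow> x < real (\<sigma>!j) \<Longrightarrow> c\<sigma>!j \<noteq> F x"
    using newc_props(1,2)[where xs="map real \<sigma>"] unfolding F_def cr m_def by auto
  have F2: "\<And>x c. 1 \<le> c \<Longrightarrow> c < F x \<Longrightarrow> \<exists>j<m. x < real (\<sigma>!j) \<and> c\<sigma>!j = c"
    using newc_props(3)[where xs="map real \<sigma>"] unfolding F_def cr m_def by fastforce
  have F3: "\<And>x j. j < m \<Longrightarrow> x < real (\<sigma>!j) \<Longrightarrow> c\<sigma>!j < F x"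
    using newc_gt[where xs="map real \<sigma>"] unfolding F_def cr m_def by fastforce
  have F4: "\<And>x c. 1 \<le> c \<Longrightarrow> (\<forall>j<m. x < real (\<sigma>!j) \<longrightarrow> c\<sigma>!j \<noteq> c) \<Longrightarrow> F x \<le> c"
    using newc_props(4)[where xs="map real \<sigma>"] unfolding F_def cr m_def by fastforce
  define Alo where "Alo = (\<lambda>i. \<sigma>!(r+i)) ` {i. i < k-1 \<and> \<tau>!(q+i) < v}"
  define Ahi where "Ahi = (\<lambda>i. \<sigma>!(r+i)) ` {i. i < k-1 \<and> v < \<tau>!(q+i)}"
  define a where "a = Max (insert 0 Alo)"
  define b where "b = Min (insert (m+1) Ahi)"
  have fA: "finite Alo" "finite Ahi" unfolding Alo_def Ahi_def by auto
  have a_ge: "\<And>i. i < k-1 \<Longrightarrow> \<tau>!(q+i) < v \<Longrightarrow> \<sigma>!(r+i) \<le> a"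
    unfolding a_def Alo_def using fA by (intro Max_ge) (auto simp: Alo_def)
  have b_le: "\<And>i. i < k-1 \<Longrightarrow> v < \<tau>!(q+i) \<Longrightarrow> b \<le> \<sigma>!(r+i)"
    unfolding b_def Ahi_def using fA by (intro Min_le) (auto simp: Ahi_def)
  have b_m: "b \<le> m+1" unfolding b_def using fA by (intro Min_le) auto
  have a_cases: "a = 0 \<or> (\<exists>ia<k-1. \<tau>!(q+ia) < v \<and> a = \<sigma>!(r+ia))"
  proof -
    have "a \<in> insert 0 Alo" unfolding a_def using fA by (intro Max_in) auto
    thus ?thesis unfolding Alo_def by auto
  qed
  have b_cases: "b = m+1 \<or> (\<exists>ib<k-1. v < \<tau>!(q+ib) \<and> b = \<sigma>!(r+ib))"
  proof -
    have "b \<in> insert (m+1) Ahi" unfolding b_def using fA by (intro Min_in) auto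
    thus ?thesis unfolding Ahi_def by auto
  qed
  have win: "\<And>i. i < k-1 \<Longrightarrow> r+i < m" using mo by simp
  have ab: "a < b"
  proof -
    have "a \<le> m" using a_cases bnd win by fastforce
    from a_cases show ?thesis
    proof
      assume a0: "a = 0"
      from b_cases show ?thesis
      proof
        assume "\<exists>ib<k-1. v < \<tau>!(q+ib) \<and> b = \<sigma>!(r+ib)"
        then obtain ib where "ib < k-1" "b = \<sigma>!(r+ib)" by auto
        thus ?thesis using a0 bnd[of "r+ib"] win by auto
      qed (use a0 in simp)
    next
      assume "\<exists>ia<k-1. \<tau>!(q+ia) < v \<and> a = \<sigma>!(r+ia)"
      then obtain ia where ia: "ia < k-1" "\<tau>!(q+ia) < v" "a = \<sigma>!(r+ia)" by auto
      from b_cases show ?thesis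
      proof
        assume "\<exists>ib<k-1. v < \<tau>!(q+ib) \<and> b = \<sigma>!(r+ib)"
        then obtain ib where ib: "ib < k-1" "v < \<tau>!(q+ib)" "b = \<sigma>!(r+ib)" by auto
        have "\<tau>!(q+ia) < \<tau>!(q+ib)" using ia ib by simp
        thus ?thesis using ord[OF ia(1) ib(1)] ia ib by simp
      qed (use \<open>a \<le> m\<close> in simp)
    qed
  qed
  have step: "G i \<le> G (Suc i) + 1" if i: "1 \<le> i" "i \<le> m" for i
  proof -
    obtain p where p: "p < m" "\<sigma>!p = i" using ex i by blast
    have x2: "real (Suc i) - 1/2 = real i + 1/2" by simp
    have cp: "c\<sigma>!p \<le> G (Suc i)"
      unfolding c\<sigma>_def
    proof (rule col_props(4))
      show "p < length \<sigma>" using p(1) unfolding m_def by simp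
      show "1 \<le> G (Suc i)" unfolding G_def by (rule F1(1))
      show "\<forall>j<p. \<sigma>!p < \<sigma>!j \<longrightarrow> cols \<sigma>!j \<noteq> G (Suc i)"
      proof (intro allI impI)
        fix j assume j: "j < p" "\<sigma>!p < \<sigma>!j"
        hence "real (Suc i) - 1/2 < real (\<sigma>!j)" using p half_lt[of "Suc i" "\<sigma>!j"] by simp
        thus "cols \<sigma>!j \<noteq> G (Suc i)" using F1(2)[of j] j p unfolding G_def c\<sigma>_def by simp
      qed
    qed
    show ?thesis unfolding G_def
    proof (rule F4)
      show "1 \<le> F (real (Suc i) - 1/2) + 1" by simp
      show "\<forall>j<m. real i - 1/2 < real (\<sigma>!j) \<longrightarrow> c\<sigma>!j \<noteq> F (real (Suc i) - 1/2) + 1"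
      proof (intro allI impI)
        fix j assume j: "j < m" "real i - 1/2 < real (\<sigma>!j)"
        hence ij: "i \<le> \<sigma>!j" using half_lt by blast
        show "c\<sigma>!j \<noteq> F (real (Suc i) - 1/2) + 1"
        proof (cases "\<sigma>!j = i")
          case True
          hence "j = p" using p j d\<sigma> unfolding m_def by (metis nth_eq_iff_index_eq)
          thus ?thesis using cp unfolding G_def by simp
        next
          case False
          hence "real (Suc i) - 1/2 < real (\<sigma>!j)" using ij half_lt[of "Suc i" "\<sigma>!j"] by simp
          thus ?thesis using F3[OF j(1)] by fastforce
        qed
      qed
    qed
  qed
  have lower: "G b \<le> d"
  proof (rule ccontr)
    assume "\<not> G b \<le> d"
    then obtain j where j: "j < m" "real b - 1/2 < real (\<sigma>!j)" "c\<sigma>!j = d"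
      using F2[of d "real b - 1/2"] d1 unfolding G_def by (meson not_le)
    have bj: "b \<le> \<sigma>!j" using j(2) half_lt by blast
    from b_cases show False
    proof
      assume "b = m+1" thus False using bj bnd[OF j(1)] by simp
    next
      assume "\<exists>ib<k-1. v < \<tau>!(q+ib) \<and> b = \<sigma>!(r+ib)"
      then obtain ib where ib: "ib < k-1" "v < \<tau>!(q+ib)" "b = \<sigma>!(r+ib)" by auto
      show False
      proof (cases "r \<le> j")
        case True
        define i1 where "i1 = j - r"
        have i1: "i1 < k-1" "j = r + i1" using True j(1) mo unfolding i1_def by auto
        have c1: "c\<tau>!(q+i1) = d" using colw[OF i1(1)] j(3) i1(2) by simp
        show False
        proof (cases "\<tau>!(q+i1) < v")
          case True
          have "\<sigma>!(r+i1) \<le> a" using a_ge[OF i1(1) True] .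
          thus False using ab bj i1(2) by simp
        next
          case False
          hence "v < \<tau>!(q+i1)" using neq[OF i1(1)] by simp
          moreover have "q + i1 < t - 1" using i1(1) to(1) by linarith
          ultimately show False using \<tau>C1[of "q+i1"] c1 by blast
        qed
      next
        case False
        hence jl: "j < r+ib" by simp
        have "\<sigma>!j \<noteq> \<sigma>!(r+ib)" using jl win[OF ib(1)] j(1) d\<sigma> unfolding m_def
          by (simp add: nth_eq_iff_index_eq)
        hence "\<sigma>!(r+ib) < \<sigma>!j" using bj ib(3) by simp
        hence "c\<sigma>!j < c\<sigma>!(r+ib)" using col_less[OF jl, of \<sigma>] win[OF ib(1)] unfolding c\<sigma>_def m_def by simp
        moreover have "c\<tau>!(q+ib) < d" using \<tau>C3[of "q+ib"] ib to by simp
        ultimately show False using colw[OF ib(1)] j(3) by simp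
      qed
    qed
  qed
  have upper: "d \<le> G (Suc a)"
  proof (cases "d = 1")
    case True thus ?thesis using F1(1) unfolding G_def by simp
  next
    case False
    hence d2: "2 \<le> d" using d1 by simp
    have dd: "1 \<le> d - 1" "d - 1 < d" using d2 by auto
    then obtain z where z: "z < t-1" "v < \<tau>!z" "c\<tau>!z = d - 1" using \<tau>C2[of "d-1"] by blast
    have "\<exists>j<m. Suc a \<le> \<sigma>!j \<and> c\<sigma>!j = d - 1"
    proof (cases "a = 0")
      case True
      have "d - 1 \<in> set c\<sigma>" using rainbow dbound d2 unfolding c\<sigma>_def d_def t_def by auto
      then obtain j where "j < m" "c\<sigma>!j = d-1" unfolding c\<sigma>_def m_def by (auto simp: in_set_conv_nth)
      thus ?thesis using bnd True by fastforce
    next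
      case False
      then obtain ia where ia: "ia < k-1" "\<tau>!(q+ia) < v" "a = \<sigma>!(r+ia)" using a_cases by auto
      show ?thesis
      proof (cases "q \<le> z")
        case True
        define i1 where "i1 = z - q"
        have i1: "i1 < k-1" "z = q + i1" using True z(1) to unfolding i1_def by auto
        have "b \<le> \<sigma>!(r+i1)" using b_le[OF i1(1)] z(2) i1(2) by simp
        moreover have "c\<sigma>!(r+i1) = d-1" using colw[OF i1(1)] z(3) i1(2) by simp
        ultimately show ?thesis using ab win[OF i1(1)] by (intro exI[of _ "r+i1"]) auto
      next
        case False
        hence zl: "z < q+ia" by simp
        have "\<tau>!(q+ia) < \<tau>!z" using ia z by simp
        hence "c\<tau>!z < c\<tau>!(q+ia)" using col_less[OF zl, of \<tau>] to ia(1) unfolding c\<tau>_def t_def by simp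
        hence lt: "d - 1 < c\<sigma>!(r+ia)" using colw[OF ia(1)] z(3) by simp
        obtain j where j: "j < r+ia" "\<sigma>!(r+ia) < \<sigma>!j" "cols \<sigma>!j = d-1"
          using col_props(3)[of "r+ia" \<sigma> "d-1"] lt dd(1) win[OF ia(1)] unfolding c\<sigma>_def m_def by blast
        thus ?thesis using ia win[OF ia(1)] unfolding c\<sigma>_def by (intro exI[of _ j]) auto
      qed
    qed
    then obtain j where j: "j < m" "Suc a \<le> \<sigma>!j" "c\<sigma>!j = d - 1" by blast
    have "real (Suc a) - 1/2 < real (\<sigma>!j)" using j(2) half_lt by blast
    hence "d - 1 < G (Suc a)" using F3[OF j(1)] j(3) unfolding G_def by fastforce
    thus ?thesis by simp
  qed
  obtain \<iota> where \<iota>: "\<iota> \<in> {Suc a..b}" "G \<iota> = d"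
    using dIVT[of "Suc a" b G d] ab lower upper step b_m by fastforce
  have \<iota>r: "1 \<le> \<iota>" "\<iota> \<le> m+1" using \<iota> b_m by auto
  have isoR: "oiso (map real (drop (length \<sigma> - k + 1) \<sigma>)) (take (k-1) (drop (length \<tau> - k) \<tau>))"
    using oiso_trans[OF oiso_sym[OF oiso_real] iso] .
  have "oiso (map real (drop (length \<sigma> - k + 1) \<sigma>) @ [real \<iota> - 1/2])
          (take (k-1) (drop (length \<tau> - k) \<tau>) @ [\<tau> ! (length \<tau> - 1)])"
  proof (rule oiso_snoc[OF isoR], intro allI impI)
    fix i assume "i < length (map real (drop (length \<sigma> - k + 1) \<sigma>))"
    hence i: "i < k-1" using k by simp
    have e1: "map real (drop (length \<sigma> - k + 1) \<sigma>) ! i = real (\<sigma>!(r+i))"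
      using i k unfolding r_def m_def by simp
    have e2: "take (k-1) (drop (length \<tau> - k) \<tau>) ! i = \<tau>!(q+i)"
      using i k unfolding q_def t_def by simp
    have e3: "\<tau> ! (length \<tau> - 1) = v" unfolding v_def t_def ..
    show "(map real (drop (length \<sigma> - k + 1) \<sigma>) ! i \<le> real \<iota> - 1/2 \<longleftrightarrow>
           take (k-1) (drop (length \<tau> - k) \<tau>) ! i \<le> \<tau> ! (length \<tau> - 1)) \<and>
          (real \<iota> - 1/2 \<le> map real (drop (length \<sigma> - k + 1) \<sigma>) ! i \<longleftrightarrow>
           \<tau> ! (length \<tau> - 1) \<le> take (k-1) (drop (length \<tau> - k) \<tau>) ! i)"
      unfolding e1 e2 e3
    proof (cases "\<tau>!(q+i) < v")
      case True
      have "\<sigma>!(r+i) < \<iota>" using a_ge[OF i True] \<iota>(1) by simp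
      hence "real (\<sigma>!(r+i)) < real \<iota> - 1/2" using half_gt by blast
      thus "(real (\<sigma>!(r+i)) \<le> real \<iota> - 1/2 \<longleftrightarrow> \<tau>!(q+i) \<le> v) \<and>
            (real \<iota> - 1/2 \<le> real (\<sigma>!(r+i)) \<longleftrightarrow> v \<le> \<tau>!(q+i))" using True by auto
    next
      case False
      hence vt: "v < \<tau>!(q+i)" using neq[OF i] by simp
      have "\<iota> \<le> \<sigma>!(r+i)" using b_le[OF i vt] \<iota>(1) by simp
      hence "real \<iota> - 1/2 < real (\<sigma>!(r+i))" using half_lt by blast
      thus "(real (\<sigma>!(r+i)) \<le> real \<iota> - 1/2 \<longleftrightarrow> \<tau>!(q+i) \<le> v) \<and>
            (real \<iota> - 1/2 \<le> real (\<sigma>!(r+i)) \<longleftrightarrow> v \<le> \<tau>!(q+i))" using vt by auto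
    qed
  qed
  moreover have "newc (map real \<sigma>) (cols \<sigma>) (real \<iota> - 1/2) = cols \<tau> ! (length \<tau> - 1)"
    using \<iota>(2) unfolding G_def F_def c\<sigma>_def d_def t_def .
  ultimately show ?thesis using \<iota>r unfolding m_def by auto
qed



lemma Av_facts: "\<sigma> \<in> Av n \<Longrightarrow> is_perm \<sigma> \<and> \<not> contains_decr n \<sigma>"
  by (auto simp: Av_def Av_m_def)

lemma en_expand: "length cs = length xs \<Longrightarrow> en j (xs, cs) = (std (drop (length xs - j) xs), drop (length xs - j) cs)"
  by (simp add: en_def pat_c_def nths_interval)

lemma be_expand: "be j (xs, cs) = (std (take j xs), take j cs)"
  by (simp add: be_def pat_c_def nths_prefix)

lemma split_last_drop:
  assumes "1 \<le> k" "k \<le> length xs"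
  shows "drop (length xs - k) xs = take (k-1) (drop (length xs - k) xs) @ [xs ! (length xs - 1)]"
proof -
  define D where "D = drop (length xs - k) xs"
  have lD: "length D = k" using assms unfolding D_def by simp
  have "drop (k-1) D = D!(k-1) # drop k D" using Cons_nth_drop_Suc[of "k-1" D] lD assms by simp
  hence "drop (k-1) D = [D!(k-1)]" using lD by simp
  moreover have "D!(k-1) = xs ! (length xs - 1)" using assms unfolding D_def by simp
  ultimately have "D = take (k-1) D @ [xs ! (length xs - 1)]" by (metis append_take_drop_id)
  thus ?thesis unfolding D_def .
qed

theorem mainTheorem12:
  fixes n k :: nat and \<sigma> \<pi> c \<pi>' c' :: "nat list"
  assumes "n \<ge> 2" and "k \<ge> 1"
    and "\<sigma> \<in> Av n" and "length \<sigma> \<ge> k"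
    and "set (ritmo \<sigma>) = {1..n-1}"
    and "(\<pi>, c) = en k (S \<sigma>)"
    and "(\<pi>', c') \<in> ovc_edges k n"
    and "ovc_start k (\<pi>', c') = ovc_arrival k (\<pi>, c)"
  shows "\<exists>\<iota>\<in>{1..length \<sigma> + 1}. en k (S (star \<sigma> \<iota>)) = (\<pi>', c')"
proof -
  have P\<sigma>: "is_perm \<sigma>" using Av_facts[OF assms(3)] by blast
  have d\<sigma>: "distinct \<sigma>" using perm_facts(1)[OF P\<sigma>] .
  have r\<sigma>: "ritmo \<sigma> = cols \<sigma>" using ritmo_cols[OF P\<sigma>] .
  obtain \<tau> where \<tau>: "\<tau> \<in> Av n" "k \<le> length \<tau>" "en k (S \<tau>) = (\<pi>', c')"
    using assms(7) unfolding ovc_edges_def inherited_def by auto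
  have P\<tau>: "is_perm \<tau>" and nc\<tau>: "\<not> contains_decr n \<tau>" using Av_facts[OF \<tau>(1)] by auto
  have d\<tau>: "distinct \<tau>" using perm_facts(1)[OF P\<tau>] .
  have r\<tau>: "ritmo \<tau> = cols \<tau>" using ritmo_cols[OF P\<tau>] .
  define m where "m = length \<sigma>"
  define t where "t = length \<tau>"
  have k: "1 \<le> k" "k \<le> m" "k \<le> t" using assms(2,4) \<tau>(2) unfolding m_def t_def by auto
  have \<pi>c: "\<pi> = std (drop (m-k) \<sigma>)" "c = drop (m-k) (cols \<sigma>)"
    using assms(6) en_expand[of "cols \<sigma>" \<sigma> k] unfolding S_def r\<sigma> m_def by auto
  have \<pi>c': "\<pi>' = std (drop (t-k) \<tau>)" "c' = drop (t-k) (cols \<tau>)"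
    using \<tau>(3) en_expand[of "cols \<tau>" \<tau> k] unfolding S_def r\<tau> t_def by auto
  have l\<pi>: "length \<pi> = k" "length c = k" using \<pi>c k unfolding m_def by auto
  have arr: "ovc_arrival k (\<pi>, c) = (std (drop (m-k+1) \<sigma>), drop (m-k+1) (cols \<sigma>))"
  proof -
    have "ovc_arrival k (\<pi>, c) = (std (drop 1 \<pi>), drop 1 c)"
      unfolding ovc_arrival_def using en_expand[of c \<pi> "k-1"] l\<pi> k by simp
    also have "std (drop 1 \<pi>) = std (drop 1 (drop (m-k) \<sigma>))"
      unfolding \<pi>c(1) by (rule std_std_drop) (use d\<sigma> in simp)
    finally show ?thesis unfolding \<pi>c(2) by (simp add: add.commute)
  qed
  have st: "ovc_start k (\<pi>', c') = (std (take (k-1) (drop (t-k) \<tau>)), take (k-1) (drop (t-k) (cols \<tau>)))"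
  proof -
    have "ovc_start k (\<pi>', c') = (std (take (k-1) \<pi>'), take (k-1) c')"
      unfolding ovc_start_def be_expand ..
    also have "std (take (k-1) \<pi>') = std (take (k-1) (drop (t-k) \<tau>))"
      unfolding \<pi>c'(1) by (rule std_std_take) (use d\<tau> in simp)
    finally show ?thesis unfolding \<pi>c'(2) .
  qed
  have eqs: "std (drop (m-k+1) \<sigma>) = std (take (k-1) (drop (t-k) \<tau>))"
     "drop (m-k+1) (cols \<sigma>) = take (k-1) (drop (t-k) (cols \<tau>))"
    using assms(8) arr st by auto
  have iso: "oiso (drop (m-k+1) \<sigma>) (take (k-1) (drop (t-k) \<tau>))" using std_eq_oiso[OF eqs(1)] .
  have db: "cols \<tau> ! (t - 1) \<le> n - 1"
    using colour_bound[OF nc\<tau>, of "t-1"] k assms(1) unfolding t_def by fastforce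
  have rb: "set (cols \<sigma>) = {1..n-1}" using assms(5) r\<sigma> by simp
  obtain \<iota> where \<iota>: "\<iota> \<in> {1..m+1}"
    "oiso (map real (drop (m - k + 1) \<sigma>) @ [real \<iota> - 1/2]) (take (k-1) (drop (t - k) \<tau>) @ [\<tau> ! (t - 1)])"
    "newc (map real \<sigma>) (cols \<sigma>) (real \<iota> - 1/2) = cols \<tau> ! (t - 1)"
    using core[OF P\<sigma> d\<tau> k(1) k(2)[unfolded m_def] k(3)[unfolded t_def] iso[unfolded m_def t_def]
       eqs(2)[unfolded m_def t_def] db[unfolded t_def] rb] unfolding m_def t_def by blast
  define x where "x = real \<iota> - 1/2"
  define Y where "Y = map real \<sigma> @ [x]"
  have xn: "x \<notin> set (map real \<sigma>)"
  proof
    assume "x \<in> set (map real \<sigma>)"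
    then obtain s where "x = real s" by auto
    thus False using half_lt[of \<iota> s] half_gt[of s \<iota>] unfolding x_def by auto
  qed
  have dY: "distinct Y" unfolding Y_def using xn d\<sigma> by (simp add: distinct_map)
  have lY: "length Y = m + 1" unfolding Y_def m_def by simp
  have cr: "cols (map real \<sigma>) = cols \<sigma>" by (rule cols_oiso[OF oiso_sym[OF oiso_real]])
  have rs: "ritmo (star \<sigma> \<iota>) = cols \<sigma> @ [newc (map real \<sigma>) (cols \<sigma>) x]"
  proof -
    have "star \<sigma> \<iota> = std Y" unfolding star_def Y_def x_def ..
    hence "ritmo (star \<sigma> \<iota>) = cols (std Y)" using ritmo_cols[OF is_perm_std[OF dY]] by simp
    also have "\<dots> = cols Y" by (rule cols_oiso[OF oiso_sym[OF oiso_std]])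
    finally show ?thesis unfolding Y_def cols_snoc cr .
  qed
  have ss: "star \<sigma> \<iota> = std Y" unfolding star_def Y_def x_def ..
  have mk: "m + 1 - k = m - k + 1" using k by simp
  have lr: "length (ritmo (star \<sigma> \<iota>)) = length (star \<sigma> \<iota>)" using rs ss lY unfolding m_def by simp
  have ls: "length (star \<sigma> \<iota>) = m+1" using ss lY by simp
  have en1: "en k (S (star \<sigma> \<iota>)) = (std (drop (m+1-k) (std Y)), drop (m+1-k) (ritmo (star \<sigma> \<iota>)))"
    using en_expand[OF lr, of k] unfolding S_def ls by (simp only: ss)
  have dropY: "drop (m+1-k) Y = map real (drop (m - k + 1) \<sigma>) @ [x]"
    unfolding Y_def mk using k unfolding m_def by (simp add: drop_map)
  have A: "std (drop (m+1-k) (std Y)) = \<pi>'"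
  proof -
    have "std (drop (m+1-k) (std Y)) = std (drop (m+1-k) Y)" by (rule std_std_drop[OF dY])
    also have "\<dots> = std (take (k-1) (drop (t - k) \<tau>) @ [\<tau> ! (t - 1)])"
    proof -
      have dd: "distinct (drop (m+1-k) Y)" using dY by simp
      have "oiso (drop (m+1-k) Y) (take (k-1) (drop (t - k) \<tau>) @ [\<tau> ! (t - 1)])"
        using \<iota>(2) unfolding dropY x_def .
      thus ?thesis using std_oiso_eq dd by blast
    qed
    also have "take (k-1) (drop (t - k) \<tau>) @ [\<tau> ! (t - 1)] = drop (t-k) \<tau>"
      using split_last_drop[of k \<tau>] k unfolding t_def by simp
    finally show ?thesis using \<pi>c'(1) by simp
  qed
  have B: "drop (m+1-k) (ritmo (star \<sigma> \<iota>)) = c'"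
  proof -
    have "drop (m+1-k) (ritmo (star \<sigma> \<iota>)) = drop (m-k+1) (cols \<sigma>) @ [cols \<tau> ! (t - 1)]"
      unfolding rs mk using k \<iota>(3) unfolding m_def x_def by simp
    also have "\<dots> = take (k-1) (drop (t-k) (cols \<tau>)) @ [cols \<tau> ! (length (cols \<tau>) - 1)]"
      using eqs(2) unfolding t_def by simp
    also have "\<dots> = drop (t-k) (cols \<tau>)"
      using split_last_drop[of k "cols \<tau>"] k unfolding t_def by simp
    finally show ?thesis using \<pi>c'(2) by simp
  qed
  show ?thesis using \<iota>(1) en1 A B unfolding m_def by auto
qed


end
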